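(* If $G$ is a $4$-regular graph, then $\mathrm{TC}_2(G)=4$.
   Context: All graphs are finite, simple and connected. $N(v)$ denotes the open neighborhood of $v$. A set $S\subseteq V(G)$ is a total $2$-dominating set if $|N(v)\cap S|\ge 2$ for every $v\in V(G)$. Two disjoint sets $U,W\subseteq V(G)$ form a total $2$-coalition if neither is a total $2$-dominating set but $U\cup W$ is. A total $2$-coalition partition of $G$ is a partition $\Omega$ of $V(G)$ in which every set forms a total $2$-coalition with some other set of $\Omega$; $\mathrm{TC}_2(G)$ is the maximum cardinality of such a partition. *)

theory Defs
  imports Main
begin

definition simple_graph :: "'a set \<Rightarrow> ('a \<Rightarrow> 'a \<Rightarrow> bool) \<Rightarrow> bool" where
  "simple_graph V E \<longleftrightarrow> finite V \<and> V \<noteq> {}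
     \<and> (\<forall>u v. E u v \<longrightarrow> u \<in> V \<and> v \<in> V)
     \<and> (\<forall>u v. E u v \<longrightarrow> E v u)
     \<and> (\<forall>v. \<not> E v v)"

definition connected_graph :: "'a set \<Rightarrow> ('a \<Rightarrow> 'a \<Rightarrow> bool) \<Rightarrow> bool" where
  "connected_graph V E \<longleftrightarrow> simple_graph V E \<and> (\<forall>u\<in>V. \<forall>v\<in>V. E\<^sup>*\<^sup>* u v)"

definition nbhd :: "'a set \<Rightarrow> ('a \<Rightarrow> 'a \<Rightarrow> bool) \<Rightarrow> 'a \<Rightarrow> 'a set" where
  "nbhd V E v = {u \<in> V. E v u}"

definition regular :: "'a set \<Rightarrow> ('a \<Rightarrow> 'a \<Rightarrow> bool) \<Rightarrow> nat \<Rightarrow> bool" where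
  "regular V E k \<longleftrightarrow> (\<forall>v\<in>V. card (nbhd V E v) = k)"

definition total_2_dom :: "'a set \<Rightarrow> ('a \<Rightarrow> 'a \<Rightarrow> bool) \<Rightarrow> 'a set \<Rightarrow> bool" where
  "total_2_dom V E S \<longleftrightarrow> S \<subseteq> V \<and> (\<forall>v\<in>V. card (nbhd V E v \<inter> S) \<ge> 2)"

definition total_2_coalition :: "'a set \<Rightarrow> ('a \<Rightarrow> 'a \<Rightarrow> bool) \<Rightarrow> 'a set \<Rightarrow> 'a set \<Rightarrow> bool" where
  "total_2_coalition V E U W \<longleftrightarrow> U \<inter> W = {}
     \<and> \<not> total_2_dom V E U \<and> \<not> total_2_dom V E W \<and> total_2_dom V E (U \<union> W)"

definition is_partition :: "'a set \<Rightarrow> 'a set set \<Rightarrow> bool" where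
  "is_partition V P \<longleftrightarrow> \<Union>P = V \<and> {} \<notin> P
     \<and> (\<forall>A\<in>P. \<forall>B\<in>P. A \<noteq> B \<longrightarrow> A \<inter> B = {})"

definition tc2_partition :: "'a set \<Rightarrow> ('a \<Rightarrow> 'a \<Rightarrow> bool) \<Rightarrow> 'a set set \<Rightarrow> bool" where
  "tc2_partition V E P \<longleftrightarrow> is_partition V P
     \<and> (\<forall>A\<in>P. \<exists>B\<in>P. B \<noteq> A \<and> total_2_coalition V E A B)"

definition TC2 :: "'a set \<Rightarrow> ('a \<Rightarrow> 'a \<Rightarrow> bool) \<Rightarrow> nat" where
  "TC2 V E = Max {card P | P. tc2_partition V E P}"

end

theory Submission
  imports Defs
begin

lemma cnt_un:
  assumes "finite N" "X \<inter> Y = {}"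
  shows "card (N \<inter> (X \<union> Y)) = card (N \<inter> X) + card (N \<inter> Y)"
proof -
  have "N \<inter> (X \<union> Y) = (N \<inter> X) \<union> (N \<inter> Y)" by blast
  moreover have "(N \<inter> X) \<inter> (N \<inter> Y) = {}" using assms(2) by blast
  ultimately show ?thesis using assms(1) by (simp add: card_Un_disjoint)
qed

lemma nb_fin: "simple_graph V E \<Longrightarrow> finite (nbhd V E v)"
  unfolding simple_graph_def nbhd_def by auto

lemma cnt4:
  assumes "simple_graph V E" "regular V E 4" "v \<in> V"
  shows "card (nbhd V E v \<inter> X) \<le> 4"
proof -
  have "card (nbhd V E v \<inter> X) \<le> card (nbhd V E v)"
    by (rule card_mono[OF nb_fin[OF assms(1)]]) blast
  then show ?thesis using assms(2,3) unfolding regular_def by auto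
qed

lemma sum5:
  assumes sg: "simple_graph V E" and reg: "regular V E 4" and v: "v \<in> V"
    and d: "X1 \<inter> X2 = {}" "X1 \<inter> X3 = {}" "X1 \<inter> X4 = {}" "X1 \<inter> X5 = {}"
    "X2 \<inter> X3 = {}" "X2 \<inter> X4 = {}" "X2 \<inter> X5 = {}"
    "X3 \<inter> X4 = {}" "X3 \<inter> X5 = {}" "X4 \<inter> X5 = {}"
  shows "card (nbhd V E v \<inter> X1) + card (nbhd V E v \<inter> X2) + card (nbhd V E v \<inter> X3)
        + card (nbhd V E v \<inter> X4) + card (nbhd V E v \<inter> X5) \<le> 4"
proof -
  let ?N = "nbhd V E v"
  have f: "finite ?N" by (rule nb_fin[OF sg])
  have "card (?N \<inter> (X1 \<union> (X2 \<union> (X3 \<union> (X4 \<union> X5))))) =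
     card (?N \<inter> X1) + card (?N \<inter> (X2 \<union> (X3 \<union> (X4 \<union> X5))))"
    by (rule cnt_un[OF f]) (use d in blast)
  also have "card (?N \<inter> (X2 \<union> (X3 \<union> (X4 \<union> X5)))) =
     card (?N \<inter> X2) + card (?N \<inter> (X3 \<union> (X4 \<union> X5)))"
    by (rule cnt_un[OF f]) (use d in blast)
  also have "card (?N \<inter> (X3 \<union> (X4 \<union> X5))) =
     card (?N \<inter> X3) + card (?N \<inter> (X4 \<union> X5))"
    by (rule cnt_un[OF f]) (use d in blast)
  also have "card (?N \<inter> (X4 \<union> X5)) = card (?N \<inter> X4) + card (?N \<inter> X5)"
    by (rule cnt_un[OF f]) (use d in blast)
  finally show ?thesis using cnt4[OF sg reg v, of "X1 \<union> (X2 \<union> (X3 \<union> (X4 \<union> X5)))"]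
    by linarith
qed

lemma domD: "total_2_dom V E S \<Longrightarrow> v \<in> V \<Longrightarrow> card (nbhd V E v \<inter> S) \<ge> 2"
  unfolding total_2_dom_def by auto

lemma domD_un:
  assumes "total_2_dom V E (X \<union> Y)" "v \<in> V" "simple_graph V E" "X \<inter> Y = {}"
  shows "card (nbhd V E v \<inter> X) + card (nbhd V E v \<inter> Y) \<ge> 2"
  using domD[OF assms(1,2)] cnt_un[OF nb_fin[OF assms(3)] assms(4)] by simp

lemma L2:
  assumes sg: "simple_graph V E" and reg: "regular V E 4" and part: "is_partition V P"
    and mem: "A \<in> P" "B \<in> P" "C1 \<in> P" "C2 \<in> P" "C3 \<in> P"
    and dist: "A \<noteq> B" "A \<noteq> C1" "A \<noteq> C2" "A \<noteq> C3" "B \<noteq> C1" "B \<noteq> C2" "B \<noteq> C3"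
      "C1 \<noteq> C2" "C1 \<noteq> C3" "C2 \<noteq> C3"
    and h1: "total_2_dom V E (A \<union> B)" and h2: "total_2_dom V E (A \<union> C1)"
    and h3: "total_2_dom V E (A \<union> C2)"
    and h4: "total_2_dom V E (A \<union> C3) \<or> total_2_dom V E (B \<union> C3)"
    and nA: "\<not> total_2_dom V E A"
  shows False
proof -
  have disj: "\<And>X Y. X \<in> P \<Longrightarrow> Y \<in> P \<Longrightarrow> X \<noteq> Y \<Longrightarrow> X \<inter> Y = {}"
    using part unfolding is_partition_def by blast
  have "A \<subseteq> V" using part mem unfolding is_partition_def by blast
  then obtain v where v: "v \<in> V" and a: "card (nbhd V E v \<inter> A) < 2"
    using nA unfolding total_2_dom_def by force
  note s = sum5[OF sg reg v, of A B C1 C2 C3]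
  have d: "A \<inter> B = {}" "A \<inter> C1 = {}" "A \<inter> C2 = {}" "A \<inter> C3 = {}" "B \<inter> C1 = {}"
    "B \<inter> C2 = {}" "B \<inter> C3 = {}" "C1 \<inter> C2 = {}" "C1 \<inter> C3 = {}" "C2 \<inter> C3 = {}"
    using disj mem dist by auto
  have e1: "card (nbhd V E v \<inter> A) + card (nbhd V E v \<inter> B) \<ge> 2"
    by (rule domD_un[OF h1 v sg d(1)])
  have e2: "card (nbhd V E v \<inter> A) + card (nbhd V E v \<inter> C1) \<ge> 2"
    by (rule domD_un[OF h2 v sg d(2)])
  have e3: "card (nbhd V E v \<inter> A) + card (nbhd V E v \<inter> C2) \<ge> 2"
    by (rule domD_un[OF h3 v sg d(3)])
  have e4: "card (nbhd V E v \<inter> A) + card (nbhd V E v \<inter> C3) \<ge> 2 \<or>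
            card (nbhd V E v \<inter> B) + card (nbhd V E v \<inter> C3) \<ge> 2"
    using h4 domD_un[OF _ v sg d(4)] domD_un[OF _ v sg d(7)] by blast
  show False using s[OF d] e1 e2 e3 e4 a by linarith
qed

lemma card4: "card {a, b, c, d} \<le> 4"
  by (simp add: card_insert_if)

lemma extra:
  assumes "finite P" "card P \<ge> 5"
  shows "\<exists>x\<in>P. x \<notin> {a, b, c, d}"
proof (rule ccontr)
  assume "\<not> ?thesis"
  then have "P \<subseteq> {a, b, c, d}" by blast
  then have "card P \<le> card {a, b, c, d}"
    using assms by (simp add: card_mono)
  moreover have "card {a, b, c, d} \<le> 4" by (simp add: card_insert_if)
  ultimately show False using assms by linarith
qed

lemma upper:
  assumes sg: "simple_graph V E" and reg: "regular V E 4" and tc: "tc2_partition V E P"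
  shows "card P \<le> 4"
proof (rule ccontr)
  assume "\<not> card P \<le> 4"
  then have c5: "card P \<ge> 5" by simp
  then have finP: "finite P" by (metis card.infinite not_numeral_le_zero)
  have part: "is_partition V P" using tc unfolding tc2_partition_def by blast
  have disj: "\<And>X Y. X \<in> P \<Longrightarrow> Y \<in> P \<Longrightarrow> X \<noteq> Y \<Longrightarrow> X \<inter> Y = {}"
    using part unfolding is_partition_def by blast
  have sub: "\<And>X. X \<in> P \<Longrightarrow> X \<subseteq> V" using part unfolding is_partition_def by blast
  have partner: "\<And>X. X \<in> P \<Longrightarrow> \<exists>Y\<in>P. Y \<noteq> X \<and> total_2_coalition V E X Y"
    using tc unfolding tc2_partition_def by blast
  have "P \<noteq> {}" using c5 by (intro notI) simp
  then obtain A where A: "A \<in> P" by blast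
  obtain B where B: "B \<in> P" "B \<noteq> A" "total_2_coalition V E A B" using partner[OF A] by blast
  have claim1: "D = A \<or> D = B" if C: "C \<in> P" "C \<noteq> A" "C \<noteq> B" and D: "D \<in> P" "D \<noteq> C"
      "total_2_coalition V E C D" for C D
  proof (rule ccontr)
    assume nD: "\<not> (D = A \<or> D = B)"
    obtain X where X: "X \<in> P" "X \<notin> {A, B, C, D}" using extra[OF finP c5, of A B C D] by blast
    obtain Y where Y: "Y \<in> P" "Y \<noteq> X" "total_2_coalition V E X Y" using partner[OF X(1)] by blast
    have "total_2_dom V E Y"
      unfolding total_2_dom_def
    proof (intro conjI ballI)
      show "Y \<subseteq> V" using sub[OF Y(1)] .
      fix v assume v: "v \<in> V"
      have d: "A \<inter> B = {}" "A \<inter> C = {}" "A \<inter> D = {}" "A \<inter> X = {}" "B \<inter> C = {}"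
        "B \<inter> D = {}" "B \<inter> X = {}" "C \<inter> D = {}" "C \<inter> X = {}" "D \<inter> X = {}"
        using A B C D X nD
        by - (rule disj; blast)+
      have t1: "total_2_dom V E (A \<union> B)" using B(3) unfolding total_2_coalition_def by blast
      have t2: "total_2_dom V E (C \<union> D)" using D(3) unfolding total_2_coalition_def by blast
      have t3: "total_2_dom V E (X \<union> Y)" "X \<inter> Y = {}"
        using Y(3) unfolding total_2_coalition_def by blast+
      have e1: "card (nbhd V E v \<inter> A) + card (nbhd V E v \<inter> B) \<ge> 2"
        by (rule domD_un[OF t1 v sg d(1)])
      have e2: "card (nbhd V E v \<inter> C) + card (nbhd V E v \<inter> D) \<ge> 2"
        by (rule domD_un[OF t2 v sg d(8)])
      have e3: "card (nbhd V E v \<inter> X) + card (nbhd V E v \<inter> Y) \<ge> 2"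
        by (rule domD_un[OF t3(1) v sg t3(2)])
      show "card (nbhd V E v \<inter> Y) \<ge> 2"
        using sum5[OF sg reg v d] e1 e2 e3 by simp
    qed
    then show False using Y(3) unfolding total_2_coalition_def by blast
  qed
  obtain C1 where C1: "C1 \<in> P" "C1 \<notin> {A, B, A, B}" using extra[OF finP c5, of A B A B] by blast
  obtain C2 where C2: "C2 \<in> P" "C2 \<notin> {A, B, C1, C1}" using extra[OF finP c5, of A B C1 C1] by blast
  obtain C3 where C3: "C3 \<in> P" "C3 \<notin> {A, B, C1, C2}" using extra[OF finP c5, of A B C1 C2] by blast
  have pA: "\<And>C. C \<in> P \<Longrightarrow> C \<noteq> A \<Longrightarrow> C \<noteq> B \<Longrightarrow>
     total_2_dom V E (A \<union> C) \<or> total_2_dom V E (B \<union> C)"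
  proof -
    fix C assume C: "C \<in> P" "C \<noteq> A" "C \<noteq> B"
    obtain D where D: "D \<in> P" "D \<noteq> C" "total_2_coalition V E C D" using partner[OF C(1)] by blast
    then have "D = A \<or> D = B" using claim1 C by blast
    then have "C \<union> D = A \<union> C \<or> C \<union> D = B \<union> C" by blast
    moreover have "total_2_dom V E (C \<union> D)" using D(3) unfolding total_2_coalition_def by blast
    ultimately show "total_2_dom V E (A \<union> C) \<or> total_2_dom V E (B \<union> C)"
      by metis
  qed
  have hAB: "total_2_dom V E (A \<union> B)" "total_2_dom V E (B \<union> A)"
    "\<not> total_2_dom V E A" "\<not> total_2_dom V E B"
    using B(3) unfolding total_2_coalition_def by (simp_all add: Un_commute)
  have r1: "total_2_dom V E (A \<union> C1) \<or> total_2_dom V E (B \<union> C1)" using pA[OF C1(1)] C1(2) by simp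
  have r2: "total_2_dom V E (A \<union> C2) \<or> total_2_dom V E (B \<union> C2)" using pA[OF C2(1)] C2(2) by simp
  have r3: "total_2_dom V E (A \<union> C3) \<or> total_2_dom V E (B \<union> C3)" using pA[OF C3(1)] C3(2) by simp
  note LA = L2[OF sg reg part A B(1)] and LB = L2[OF sg reg part B(1) A]
  have m: "C1 \<in> P" "C2 \<in> P" "C3 \<in> P" "A \<noteq> B" "B \<noteq> A" "A \<noteq> C1" "A \<noteq> C2" "A \<noteq> C3"
    "B \<noteq> C1" "B \<noteq> C2" "B \<noteq> C3" "C1 \<noteq> C2" "C1 \<noteq> C3" "C2 \<noteq> C3"
    "C2 \<noteq> C1" "C3 \<noteq> C1" "C3 \<noteq> C2"
    using B C1 C2 C3 by blast+
  note LA1 = LA[OF m(1,2,3) m(4,6,7,8,9,10,11,12,13,14) hAB(1)]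
  note LA2 = LA[OF m(1,3,2) m(4,6,8,7,9,11,10,13,12,17) hAB(1)]
  note LA3 = LA[OF m(2,3,1) m(4,7,8,6,10,11,9,14,15,16) hAB(1)]
  note LB1 = LB[OF m(1,2,3) m(5,9,10,11,6,7,8,12,13,14) hAB(2)]
  note LB2 = LB[OF m(1,3,2) m(5,9,11,10,6,8,7,13,12,17) hAB(2)]
  note LB3 = LB[OF m(2,3,1) m(5,10,11,9,7,8,6,14,15,16) hAB(2)]
  show False
  proof (cases "total_2_dom V E (A \<union> C1)")
    case a1: True
    show False
    proof (cases "total_2_dom V E (A \<union> C2)")
      case True
      show False by (rule LA1[OF a1 True r3 hAB(3)])
    next
      case False
      then have b2: "total_2_dom V E (B \<union> C2)" using r2 by blast
      show False
      proof (cases "total_2_dom V E (A \<union> C3)")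
        case True
        show False by (rule LA2[OF a1 True _ hAB(3)]) (use b2 in blast)
      next
        case False
        then have b3: "total_2_dom V E (B \<union> C3)" using r3 by blast
        show False by (rule LB3[OF b2 b3 _ hAB(4)]) (use a1 in blast)
      qed
    qed
  next
    case False
    then have b1: "total_2_dom V E (B \<union> C1)" using r1 by blast
    show False
    proof (cases "total_2_dom V E (B \<union> C2)")
      case True
      show False by (rule LB1[OF b1 True _ hAB(4)]) (use r3 in blast)
    next
      case False
      then have a2: "total_2_dom V E (A \<union> C2)" using r2 by blast
      show False
      proof (cases "total_2_dom V E (B \<union> C3)")
        case True
        show False by (rule LB2[OF b1 True _ hAB(4)]) (use a2 in blast)
      next
        case False
        then have a3: "total_2_dom V E (A \<union> C3)" using r3 by blast
        show False by (rule LA3[OF a2 a3 _ hAB(3)]) (use b1 in blast)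
      qed
    qed
  qed
qed

lemma extra2:
  assumes "finite P" "card S < card P" "finite S"
  shows "\<exists>x\<in>P. x \<notin> S"
proof (rule ccontr)
  assume "\<not> ?thesis"
  then have "P \<subseteq> S" by blast
  then show False using assms
    by (meson card_mono leD)
qed

lemma dom2:
  assumes sg: "simple_graph V E" and reg: "regular V E 4"
  shows "total_2_dom V E (V - {x, y})"
  unfolding total_2_dom_def
proof (intro conjI ballI)
  show "V - {x, y} \<subseteq> V" by blast
  fix w assume w: "w \<in> V"
  have eq: "nbhd V E w \<inter> (V - {x, y}) = nbhd V E w - {x, y}" unfolding nbhd_def by blast
  have "card (nbhd V E w) - card {x, y} \<le> card (nbhd V E w - {x, y})"
    by (rule diff_card_le_card_Diff) simp
  moreover have "card {x, y} \<le> 2" by (simp add: card_insert_if)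
  moreover have "card (nbhd V E w) = 4" using reg w unfolding regular_def by blast
  ultimately show "2 \<le> card (nbhd V E w \<inter> (V - {x, y}))" unfolding eq by linarith
qed

lemma ndom1:
  assumes "v \<in> V"
  shows "\<not> total_2_dom V E {x}"
proof
  assume "total_2_dom V E {x}"
  then have "card (nbhd V E v \<inter> {x}) \<ge> 2" using assms unfolding total_2_dom_def by blast
  moreover have "card (nbhd V E v \<inter> {x}) \<le> card {x}" by (rule card_mono) auto
  ultimately show False by simp
qed

theorem proposition3p8:
  fixes V :: "'a set" and E :: "'a \<Rightarrow> 'a \<Rightarrow> bool"
  assumes "connected_graph V E" and "regular V E 4"
  shows "TC2 V E = 4"
proof -
  have sg: "simple_graph V E" using assms(1) unfolding connected_graph_def by blast
  note reg = assms(2)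
  define S where "S = {card P | P. tc2_partition V E P}"
  have ub: "\<And>x. x \<in> S \<Longrightarrow> x \<le> 4" unfolding S_def using upper[OF sg reg] by blast
  obtain v where v: "v \<in> V" using sg unfolding simple_graph_def by blast
  let ?N = "nbhd V E v"
  have cN: "card ?N = 4" using reg v unfolding regular_def by blast
  have fN: "finite ?N" by (rule nb_fin[OF sg])
  have "\<exists>x\<in>?N. x \<notin> {}" by (rule extra2[OF fN]) (simp_all add: cN)
  then obtain b where b: "b \<in> ?N" by blast
  have "\<exists>x\<in>?N. x \<notin> {b}" by (rule extra2[OF fN]) (simp_all add: cN)
  then obtain c where c: "c \<in> ?N" "c \<notin> {b}" by blast
  have "card {b, c} \<le> 2" by (simp add: card_insert_if)
  then have "\<exists>x\<in>?N. x \<notin> {b, c}" by (intro extra2[OF fN]) (simp_all add: cN)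
  then obtain d where d: "d \<in> ?N" "d \<notin> {b, c}" by blast
  define A where "A = V - {b, c, d}"
  have inV: "b \<in> V" "c \<in> V" "d \<in> V" using b c d unfolding nbhd_def by auto
  have Ev: "E v b" "E v c" "E v d" using b c d unfolding nbhd_def by auto
  have vA: "v \<in> A" unfolding A_def using v Ev sg unfolding simple_graph_def by auto
  have bcd: "b \<notin> A" "c \<notin> A" "d \<notin> A" "b \<noteq> c" "b \<noteq> d" "c \<noteq> d"
    unfolding A_def using c d by auto
  have nA: "\<not> total_2_dom V E A"
  proof
    assume "total_2_dom V E A"
    then have "card (?N \<inter> A) \<ge> 2" using v unfolding total_2_dom_def by blast
    moreover have "?N \<inter> A = ?N - {b, c, d}" unfolding A_def nbhd_def by blast
    moreover have "card (?N - {b, c, d}) = card ?N - card {b, c, d}"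
      by (rule card_Diff_subset) (use b c d in auto)
    moreover have "card {b, c, d} = 3" using bcd by simp
    ultimately show False using cN by simp
  qed
  have u1: "A \<union> {b} = V - {c, d}" "A \<union> {c} = V - {b, d}" "A \<union> {d} = V - {b, c}"
    unfolding A_def using inV bcd by auto
  have co: "total_2_coalition V E A {x} \<and> total_2_coalition V E {x} A" if x: "x \<in> {b, c, d}" for x
  proof -
    have "\<exists>y z. A \<union> {x} = V - {y, z}" using x u1 by blast
    then obtain y z where yz: "A \<union> {x} = V - {y, z}" by blast
    have t1: "total_2_dom V E (A \<union> {x})" unfolding yz by (rule dom2[OF sg reg])
    then have t2: "total_2_dom V E ({x} \<union> A)" by (simp add: Un_commute)
    have i1: "A \<inter> {x} = {}" "{x} \<inter> A = {}" using x bcd by blast+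
    show ?thesis unfolding total_2_coalition_def using t1 t2 i1 nA ndom1[OF v, where x=x and E=E] by blast
  qed
  let ?P = "{A, {b}, {c}, {d}}"
  have dist: "A \<noteq> {b}" "A \<noteq> {c}" "A \<noteq> {d}" "{b} \<noteq> {c}" "{b} \<noteq> {d}" "{c} \<noteq> {d}"
    using bcd by auto
  have tc: "tc2_partition V E ?P"
    unfolding tc2_partition_def is_partition_def
  proof (intro conjI ballI)
    show "\<Union> ?P = V" unfolding A_def using inV by auto
    show "{} \<notin> ?P" using vA by auto
    show "\<And>X Y. X \<in> ?P \<Longrightarrow> Y \<in> ?P \<Longrightarrow> X \<noteq> Y \<longrightarrow> X \<inter> Y = {}"
      using bcd by auto
    fix X assume X: "X \<in> ?P"
    have cb: "total_2_coalition V E A {b} \<and> total_2_coalition V E {b} A" by (rule co) simp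
    have cc: "total_2_coalition V E {c} A" using co[of c] by simp
    have cd: "total_2_coalition V E {d} A" using co[of d] by simp
    have "X = A \<or> X = {b} \<or> X = {c} \<or> X = {d}" using X by simp
    then show "\<exists>Y\<in>?P. Y \<noteq> X \<and> total_2_coalition V E X Y"
    proof (elim disjE)
      assume XX: "X = A"
      have m1: "{b} \<in> ?P" by blast
      show ?thesis unfolding XX using m1 dist(1) cb by blast
    next
      assume XX: "X = {b}"
      have m1: "A \<in> ?P" by blast
      show ?thesis unfolding XX using m1 dist(1) cb by blast
    next
      assume XX: "X = {c}"
      have m1: "A \<in> ?P" by blast
      show ?thesis unfolding XX using m1 dist(2) cc by blast
    next
      assume XX: "X = {d}"
      have m1: "A \<in> ?P" by blast
      show ?thesis unfolding XX using m1 dist(3) cd by blast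
    qed
  qed
  have cP: "card ?P = 4" using dist by simp
  have S4: "4 \<in> S" unfolding S_def using tc cP by (metis (mono_tags, lifting) mem_Collect_eq)
  have fS: "finite S" using ub by (meson finite_nat_set_iff_bounded_le)
  have "Max S = 4" using Max_eqI[OF fS ub S4] by simp
  then show ?thesis unfolding TC2_def S_def .
qed

end
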